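(* The set of infinite words accepted by $\widehat{\mathcal{T}_{p/q}}$ is the topological closure (in $B^{\omega}$ with the product topology) of the set of span-words $\{M_n\ominus\mu_n : n\in\mathbb{N}\}$.
   Context: Let $p>q>1$ be coprime integers, $A_p=\{0,\dots,p-1\}$, $A_q=\{0,\dots,q-1\}$ and $B=\{p-(2q-1),\dots,p-1\}$. For $n\in\mathbb{N}$ and $a\in\mathbb{Z}$, let $\tau(n,a)=\frac{np+a}{q}$, defined only when $q$ divides $np+a$. Let $\mathcal{T}_{p/q}$ be the deterministic automaton with state set $\mathbb{N}$, alphabet $A_p$, initial state $0$, and transitions $n\xrightarrow{a}\tau(n,a)$ for $a\in A_p$ with $\tau(n,a)$ defined. The minimal word $\mu_n\in A_q^{\omega}$ (resp. maximal word $M_n\in\{p-q,\dots,p-1\}^{\omega}$) is the unique infinite word over $A_q$ (resp. over $\{p-q,\dots,p-1\}$) labelling a path of $\mathcal{T}_{p/q}$ starting at $n$. The span-word of $n$ is $M_n\ominus\mu_n$, with $\ominus$ letter-wise subtraction. Let $\widehat{\mathcal{T}_{p/q}}$ be the deterministic automaton with state set $\mathbb{N}$, alphabet $B$, initial state $0$, and transitions $n\xrightarrow{a}\tau(n,a)$ for $a\in B$ with $\tau(n,a)$ defined; an infinite word is accepted if each of its finite prefixes labels a path from $0$. *)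

theory Defs
  imports "HOL-Analysis.Analysis"
begin

text \<open>Letters and states are integers; the state set of the automata is \<open>\<nat>\<close>,
  i.e. the nonnegative integers. Infinite words are functions \<open>nat \<Rightarrow> int\<close>.\<close>

definition Aq :: "int \<Rightarrow> int set" where
  "Aq q = {0..q-1}"

definition Amax :: "int \<Rightarrow> int \<Rightarrow> int set" where
  "Amax p q = {p-q..p-1}"

definition Bset :: "int \<Rightarrow> int \<Rightarrow> int set" where
  "Bset p q = {p-(2*q-1)..p-1}"

text \<open>A run (state sequence) of \<open>T_{p/q}\<close> starting at \<open>n\<close> labelled by the first \<open>k\<close>
  letters of \<open>w\<close>: all states lie in \<open>\<nat>\<close> and each step is the transition
  \<open>s i --(w i)--> (p * s i + w i) / q\<close>, which is defined only when \<open>q\<close> divides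
  \<open>p * s i + w i\<close>.\<close>
definition finite_path :: "int \<Rightarrow> int \<Rightarrow> int \<Rightarrow> (nat \<Rightarrow> int) \<Rightarrow> nat \<Rightarrow> bool" where
  "finite_path p q n w k \<longleftrightarrow>
     (\<exists>s::nat \<Rightarrow> int. s 0 = n \<and> (\<forall>i\<le>k. s i \<ge> 0) \<and>
        (\<forall>i<k. q * s (Suc i) = p * s i + w i))"

definition infinite_path :: "int \<Rightarrow> int \<Rightarrow> int \<Rightarrow> (nat \<Rightarrow> int) \<Rightarrow> bool" where
  "infinite_path p q n w \<longleftrightarrow>
     (\<exists>s::nat \<Rightarrow> int. s 0 = n \<and> (\<forall>i. s i \<ge> 0) \<and>
        (\<forall>i. q * s (Suc i) = p * s i + w i))"

definition min_word :: "int \<Rightarrow> int \<Rightarrow> int \<Rightarrow> (nat \<Rightarrow> int)" where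
  "min_word p q n = (THE w. (\<forall>i. w i \<in> Aq q) \<and> infinite_path p q n w)"

definition max_word :: "int \<Rightarrow> int \<Rightarrow> int \<Rightarrow> (nat \<Rightarrow> int)" where
  "max_word p q n = (THE w. (\<forall>i. w i \<in> Amax p q) \<and> infinite_path p q n w)"

definition span_word :: "int \<Rightarrow> int \<Rightarrow> int \<Rightarrow> (nat \<Rightarrow> int)" where
  "span_word p q n = (\<lambda>i. max_word p q n i - min_word p q n i)"

definition accepted_hat :: "int \<Rightarrow> int \<Rightarrow> (nat \<Rightarrow> int) set" where
  "accepted_hat p q = {w. (\<forall>i. w i \<in> Bset p q) \<and> (\<forall>k. finite_path p q 0 w k)}"

definition Bomega_top :: "int \<Rightarrow> int \<Rightarrow> (nat \<Rightarrow> int) topology" where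
  "Bomega_top p q = product_topology (\<lambda>_. discrete_topology (Bset p q)) UNIV"

end

theory Submission
  imports Defs
begin

definition stp :: "int \<Rightarrow> int \<Rightarrow> int \<Rightarrow> int \<Rightarrow> int" where
  "stp p q c x = (p*x + c) div q"

definition st :: "int \<Rightarrow> int \<Rightarrow> int \<Rightarrow> int \<Rightarrow> nat \<Rightarrow> int" where
  "st p q c n i = (stp p q c ^^ i) n"

lemma st_0[simp]: "st p q c n 0 = n" by (simp add: st_def)
lemma st_Suc[simp]: "st p q c n (Suc i) = stp p q c (st p q c n i)" by (simp add: st_def)
lemma st_Suc': "st p q c n (Suc i) = st p q c (stp p q c n) i"
  by (simp add: st_def funpow_Suc_right del: funpow.simps)

lemma div_eq_aux: "(0::int) < q \<Longrightarrow> 0 \<le> e \<Longrightarrow> e < q \<Longrightarrow> (q*x + e) div q = x"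
  by simp

lemma letter_range:
  assumes "(0::int) < q"
  shows "q * stp p q c x - p * x \<in> {c-q+1..c}"
proof -
  let ?y = "p*x + c"
  have h: "q*(?y div q) = ?y - ?y mod q" by (simp add: minus_mod_eq_mult_div)
  have e: "q * stp p q c x - p * x = c - ?y mod q" using h unfolding stp_def by simp
  have "0 \<le> ?y mod q" "?y mod q < q" using assms by auto
  then show ?thesis unfolding e by auto
qed

lemma st_nonneg:
  assumes "(0::int) < q" "0 < p" "0 \<le> c" "0 \<le> n"
  shows "0 \<le> st p q c n i"
proof (induction i)
  case 0 then show ?case using assms by simp
next
  case (Suc i)
  then have "0 \<le> p * st p q c n i + c" using assms by simp
  then show ?case using assms by (simp add: stp_def pos_imp_zdiv_nonneg_iff)
qed

lemma word_char:
  assumes q: "(0::int) < q" and p: "0 < p" and c: "0 \<le> c" and n: "0 \<le> n" and lo: "lo = c - q + 1"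
  shows "(THE w. (\<forall>i. w i \<in> {lo..c}) \<and> infinite_path p q n w) =
         (\<lambda>i. q * st p q c n (Suc i) - p * st p q c n i)"
proof (rule the_equality)
  show "(\<forall>i. q * st p q c n (Suc i) - p * st p q c n i \<in> {lo..c}) \<and>
        infinite_path p q n (\<lambda>i. q * st p q c n (Suc i) - p * st p q c n i)"
    unfolding infinite_path_def
    using letter_range[OF q] st_nonneg[OF q p c n] lo by (auto intro!: exI[of _ "st p q c n"])
next
  fix w assume A: "(\<forall>i. w i \<in> {lo..c}) \<and> infinite_path p q n w"
  then obtain s where s0: "s 0 = n" and sr: "\<forall>i. q * s (Suc i) = p * s i + w i"
    unfolding infinite_path_def by blast
  have eq: "s i = st p q c n i" for i
  proof (induction i)
    case 0 then show ?case using s0 by simp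
  next
    case (Suc i)
    have "p * s i + c = q * s (Suc i) + (c - w i)" using sr by simp
    moreover have "w i \<in> {lo..c}" using A by blast
    then have "0 \<le> c - w i" "c - w i < q" using lo by auto
    ultimately have "stp p q c (s i) = s (Suc i)" unfolding stp_def using q
      by (metis div_eq_aux)
    then show ?case using Suc by simp
  qed
  show "w = (\<lambda>i. q * st p q c n (Suc i) - p * st p q c n i)"
  proof
    fix i show "w i = q * st p q c n (Suc i) - p * st p q c n i"
      using sr eq[of i] eq[of "Suc i"] by (metis add_diff_cancel_left')
  qed
qed

lemma min_word_eq:
  assumes "(0::int) < q" "0 < p" "0 \<le> n"
  shows "min_word p q n = (\<lambda>i. q * st p q (q-1) n (Suc i) - p * st p q (q-1) n i)"
  unfolding min_word_def Aq_def
  by (rule word_char) (use assms in auto)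

lemma max_word_eq:
  assumes "(0::int) < q" "q < p" "0 \<le> n"
  shows "max_word p q n = (\<lambda>i. q * st p q (p-1) n (Suc i) - p * st p q (p-1) n i)"
  unfolding max_word_def Amax_def
  by (rule word_char) (use assms in auto)

lemma span_eq:
  assumes "(0::int) < q" "q < p" "0 \<le> n"
  shows "span_word p q n i = q * (st p q (p-1) n (Suc i) - st p q (q-1) n (Suc i))
          - p * (st p q (p-1) n i - st p q (q-1) n i)"
  unfolding span_word_def using min_word_eq[of q p n] max_word_eq[of q p n] assms
  by (simp add: algebra_simps)

lemma span_accepted:
  assumes q: "(0::int) < q" and p: "q < p" and n: "0 \<le> n"
  shows "span_word p q n \<in> accepted_hat p q"
proof -
  let ?S = "st p q (q-1) n" and ?T = "st p q (p-1) n"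
  have le: "?S i \<le> ?T i" for i
  proof (induction i)
    case 0 then show ?case by simp
  next
    case (Suc i)
    have "p * ?S i \<le> p * ?T i" using Suc p q by simp
    then have "p * ?S i + (q - 1) \<le> p * ?T i + (p - 1)" using p by simp
    then show ?case by (simp add: stp_def zdiv_mono1 q)
  qed
  have B: "span_word p q n i \<in> Bset p q" for i
  proof -
    have "0 < p" using p q by simp
    have a: "q * stp p q (q-1) (?S i) - p * ?S i \<in> {q-1-q+1..q-1}" by (rule letter_range[OF q])
    have b: "q * stp p q (p-1) (?T i) - p * ?T i \<in> {p-1-q+1..p-1}" by (rule letter_range[OF q])
    show ?thesis unfolding span_word_def Bset_def
      using min_word_eq[OF q \<open>0 < p\<close> n] max_word_eq[OF q p n] a b by auto
  qed
  have "finite_path p q 0 (span_word p q n) k" for k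
    unfolding finite_path_def
    apply (rule exI[of _ "\<lambda>i. ?T i - ?S i"])
    using le span_eq[OF q p n] by simp
  then show ?thesis using B unfolding accepted_hat_def by auto
qed

lemma realize:
  assumes q: "(1::int) < q" and p: "0 < p" and cop: "coprime p q"
  shows "(\<forall>i<k. a i \<in> {0..q-1}) \<Longrightarrow>
     (\<exists>r. \<forall>t i. i < k \<longrightarrow> q * st p q (q-1) (r + q^k*t) (Suc i) - p * st p q (q-1) (r + q^k*t) i = a i)"
proof (induction k arbitrary: a)
  case 0 then show ?case by simp
next
  case (Suc k)
  let ?S = "st p q (q-1)"
  from Suc.prems have "\<forall>i<k. (\<lambda>i. a (Suc i)) i \<in> {0..q-1}" by simp
  from Suc.IH[OF this] obtain r' where r':
    "\<And>t i. i < k \<Longrightarrow> q * ?S (r' + q^k*t) (Suc i) - p * ?S (r' + q^k*t) i = a (Suc i)" by blast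
  have "coprime p (q ^ Suc k)" using cop by simp
  then have "gcd p (q ^ Suc k) = 1" by simp
  then obtain u v where uv: "u * p + v * q ^ Suc k = 1" using bezout_int[of p "q ^ Suc k"] by metis
  define X where "X = q * r' - a 0"
  define r where "r = u * X"
  show ?case
  proof (rule exI[of _ r], intro allI impI)
    fix t i assume i: "i < Suc k"
    define n where "n = r + q ^ Suc k * t"
    define m where "m = r' + q^k * (p * t - v * X)"
    have "p * n + a 0 = (u*p) * X + a 0 + p * q ^ Suc k * t"
      unfolding n_def r_def by (simp add: algebra_simps)
    also have "\<dots> = (1 - v * q ^ Suc k) * X + a 0 + p * q ^ Suc k * t"
      using uv by (simp add: eq_diff_eq)
    also have "\<dots> = q * m" unfolding m_def X_def by (simp add: algebra_simps)
    finally have pn: "p * n + a 0 = q * m" .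
    have a0: "0 \<le> a 0" "a 0 \<le> q - 1" using Suc.prems by auto
    have "p * n + (q - 1) = q * m + (q - 1 - a 0)" using pn by simp
    moreover have "(q * m + (q - 1 - a 0)) div q = m"
      using div_eq_aux[of q "q - 1 - a 0" m] a0 q by simp
    ultimately have stpn: "stp p q (q-1) n = m" unfolding stp_def by (metis (no_types))
    show "q * ?S (r + q ^ Suc k * t) (Suc i) - p * ?S (r + q ^ Suc k * t) i = a i"
    proof (cases i)
      case 0
      have "q * stp p q (q - 1) n - p * n = a 0" using stpn pn by simp
      then show ?thesis using 0 unfolding n_def by simp
    next
      case (Suc j)
      have "q * ?S m (Suc j) - p * ?S m j = a (Suc j)"
        using r'[of j "p * t - v * X"] Suc i unfolding m_def by simp
      then show ?thesis using Suc stpn unfolding n_def[symmetric]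
        by (metis st_Suc')
    qed
  qed
qed


lemma core:
  assumes q: "(1::int) < q" and p: "q < p" and cop: "coprime p q"
    and w: "w \<in> accepted_hat p q"
  shows "\<exists>n::nat. \<forall>i<k. span_word p q (int n) i = w i"
proof -
  have wB: "\<And>i. w i \<in> {p-(2*q-1)..p-1}" using w unfolding accepted_hat_def Bset_def by auto
  from w obtain d where d0: "d 0 = 0" and dr: "\<forall>i<k. q * d (Suc i) = p * d i + w i"
    unfolding accepted_hat_def finite_path_def by blast
  define a where "a i = max 0 (p - q - w i)" for i
  have arng: "a i \<in> {0..q-1}" for i using wB[of i] unfolding a_def by auto
  have awrng: "a i + w i \<in> {p-q..p-1}" for i using wB[of i] unfolding a_def by auto
  obtain r where r: "\<And>t i. i < k \<Longrightarrow> q * st p q (q-1) (r + q^k*t) (Suc i) - p * st p q (q-1) (r + q^k*t) i = a i"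
    using realize[OF q _ cop, of k a] arng p q by force
  define n where "n = r + q^k * \<bar>r\<bar>"
  have "1 \<le> q^k" using q by simp
  then have "\<bar>r\<bar> \<le> q^k * \<bar>r\<bar>" using mult_right_mono[of 1 "q^k" "\<bar>r\<bar>"] by simp
  then have n0: "0 \<le> n" unfolding n_def by linarith
  let ?S = "st p q (q-1) n" and ?T = "st p q (p-1) n"
  have Sa: "q * ?S (Suc i) - p * ?S i = a i" if "i < k" for i using r[OF that] unfolding n_def by simp
  have TSd: "?T i = ?S i + d i" if "i \<le> k" for i
    using that
  proof (induction i)
    case 0 then show ?case using d0 by simp
  next
    case (Suc i)
    then have ik: "i < k" by simp
    have "p * ?T i + (p - 1) = p * ?S i + p * d i + (p - 1)" using Suc ik by (simp add: algebra_simps)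
    also have "\<dots> = q * (?S (Suc i) + d (Suc i)) + (p - 1 - a i - w i)"
      using Sa[OF ik] dr ik by (simp add: algebra_simps)
    finally have e: "p * ?T i + (p - 1) = q * (?S (Suc i) + d (Suc i)) + (p - 1 - a i - w i)" .
    have "0 \<le> p - 1 - a i - w i" "p - 1 - a i - w i < q" using awrng[of i] by auto
    then have "(q * (?S (Suc i) + d (Suc i)) + (p - 1 - a i - w i)) div q = ?S (Suc i) + d (Suc i)"
      using div_eq_aux q by simp
    then have "stp p q (p-1) (?T i) = ?S (Suc i) + d (Suc i)" unfolding stp_def e[symmetric] .
    then show ?case by simp
  qed
  show ?thesis
  proof (rule exI[of _ "nat n"], intro allI impI)
    fix i assume i: "i < k"
    have "span_word p q (int (nat n)) i = q * d (Suc i) - p * d i"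
      using span_eq[of q p n i] q p n0 TSd[of i] TSd[of "Suc i"] i by simp
    then show "span_word p q (int (nat n)) i = w i" using dr i by simp
  qed
qed

lemma topspace_B: "topspace (Bomega_top p q) = {f. \<forall>i. f i \<in> Bset p q}"
  unfolding Bomega_top_def by (auto simp: PiE_UNIV_domain)

theorem mainTheorem9:
  fixes p q :: int
  assumes "p > q" and "q > 1" and "coprime p q"
  shows "accepted_hat p q =
         Bomega_top p q closure_of {span_word p q (int n) | n. True}"
proof
  show "accepted_hat p q \<subseteq> Bomega_top p q closure_of {span_word p q (int n) | n. True}"
  proof
    fix w assume w: "w \<in> accepted_hat p q"
    show "w \<in> Bomega_top p q closure_of {span_word p q (int n) | n. True}"
      unfolding in_closure_of
    proof (intro conjI allI impI)
      show "w \<in> topspace (Bomega_top p q)" using w unfolding topspace_B accepted_hat_def by auto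
      fix T assume T: "w \<in> T \<and> openin (Bomega_top p q) T"
      then have "openin (product_topology (\<lambda>_. discrete_topology (Bset p q)) UNIV) T"
        unfolding Bomega_top_def by blast
      then have "\<exists>U. finite {i \<in> UNIV. U i \<noteq> topspace (discrete_topology (Bset p q))} \<and>
          (\<forall>i\<in>UNIV. openin (discrete_topology (Bset p q)) (U i)) \<and> w \<in> PiE UNIV U \<and> PiE UNIV U \<subseteq> T"
        using T unfolding openin_product_topology_alt by blast
      then obtain U where fin0: "finite {i \<in> UNIV. U i \<noteq> topspace (discrete_topology (Bset p q))}"
        and wU: "w \<in> PiE UNIV U" and UT: "PiE UNIV U \<subseteq> T"
        by blast
      have fin: "finite {i. U i \<noteq> Bset p q}" using fin0 by simp
      obtain k where k: "{i. U i \<noteq> Bset p q} \<subseteq> {..<k}" using finite_nat_bounded[OF fin] by blast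
      obtain n :: nat where n: "\<forall>i<k. span_word p q (int n) i = w i"
        using core[OF assms(2) assms(1) assms(3) w] by blast
      have acc: "span_word p q (int n) \<in> accepted_hat p q"
        using span_accepted assms by simp
      have "span_word p q (int n) \<in> PiE UNIV U"
      proof -
        have "span_word p q (int n) i \<in> U i" for i
        proof (cases "i < k")
          case True then show ?thesis using n wU by (auto simp: PiE_UNIV_domain)
        next
          case False then have "U i = Bset p q" using k by auto
          then show ?thesis using acc unfolding accepted_hat_def by auto
        qed
        then show ?thesis by (simp add: PiE_UNIV_domain)
      qed
      then show "\<exists>y. y \<in> {span_word p q (int n) | n. True} \<and> y \<in> T" using UT by blast
    qed
  qed
next
  show "Bomega_top p q closure_of {span_word p q (int n) | n. True} \<subseteq> accepted_hat p q"
  proof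
    fix w assume w: "w \<in> Bomega_top p q closure_of {span_word p q (int n) | n. True}"
    then have "w \<in> topspace (Bomega_top p q)" by (simp add: in_closure_of)
    then have wB: "\<forall>i. w i \<in> Bset p q" by (simp add: topspace_B)
    have "finite_path p q 0 w k" for k
    proof -
      define T where "T = PiE UNIV (\<lambda>i. if i < k then {w i} else Bset p q)"
      have "openin (Bomega_top p q) T"
        unfolding Bomega_top_def T_def openin_PiE_gen
      proof (rule disjI2, intro conjI ballI)
        show "finite {i \<in> UNIV. (if i < k then {w i} else Bset p q) \<noteq> topspace (discrete_topology (Bset p q))}"
          by (rule finite_subset[of _ "{..<k}"]) auto
        fix i show "openin (discrete_topology (Bset p q)) (if i < k then {w i} else Bset p q)"
          using wB by auto
      qed
      moreover have "w \<in> T" unfolding T_def using wB by (auto simp: PiE_UNIV_domain)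
      ultimately obtain y where y: "y \<in> {span_word p q (int n) | n. True}" "y \<in> T"
        using w unfolding in_closure_of by blast
      then obtain n :: nat where yn: "y = span_word p q (int n)" by blast
      have "y \<in> accepted_hat p q" using yn span_accepted assms by simp
      then have fy: "finite_path p q 0 y k" unfolding accepted_hat_def by blast
      have "\<forall>i<k. y i = w i"
      proof (intro allI impI)
        fix i assume "i < k"
        have "y i \<in> (if i < k then {w i} else Bset p q)"
          using y(2) unfolding T_def PiE_UNIV_domain by (simp add: Pi_iff)
        then show "y i = w i" using \<open>i < k\<close> by simp
      qed
      then show ?thesis using fy unfolding finite_path_def by auto
    qed
    then show "w \<in> accepted_hat p q" using wB unfolding accepted_hat_def by blast
  qed
qed

end
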